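(* Let $c_0$ be a positive integer and let $\kappa_0\in\overline{\mathbb{Z}}_p$ satisfy condition $( * )$. Then there exists an increasing sequence of positive integers $(k_i)_{i\ge0}$ such that for each $i$: (a) $k_i-1>c_0(2+\log_p k_{i+1})$, and (b) no integer in $\{k_i,k_i+1,\dots,k_{i+1}-1\}$ is congruent to $\kappa_0$ modulo $p^{\lceil\log_p k_{i+1}\rceil}$ (i.e. for no such integer $k$ does $k-\kappa_0$ lie in $p^{\lceil\log_p k_{i+1}\rceil}\overline{\mathbb{Z}}_p$).
   Context: For $\lambda\in\mathbb{Z}_p$ and $m\ge1$, let $\lambda^{\{m\}}$ denote the unique integer in $\{0,1,\dots,p^m-1\}$ congruent to $\lambda$ modulo $p^m$. An element $\lambda\in\overline{\mathbb{Z}}_p$ satisfies condition $( * )$ if one of the following holds: (1) $\lambda\notin\mathbb{Z}_p$; (2) $\lambda\in\mathbb{Z}_p\setminus\mathbb{N}$ and $\lambda^{\{m\}}/m\to\infty$ as $m\to\infty$; (3) $\lambda\in\mathbb{N}$. *)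

theory Defs
  imports "HOL-Analysis.Analysis" "HOL-Computational_Algebra.Primes"
begin

text \<open>Abstract model of the ring of integers of an algebraic closure of Q_p:
  a commutative ring R with a p-adic valuation v (normalised by v(p) = 1,
  integral: v >= 0), which is a valuation ring (v x <= v y, x nonzero, implies x divides y).
  The genuine ring of integers of the algebraic closure of Q_p with its (rational-valued)
  normalised valuation satisfies all of these axioms.\<close>
definition padic_valuation_ring :: "nat \<Rightarrow> ('a::comm_ring_1 \<Rightarrow> ereal) \<Rightarrow> bool" where
  "padic_valuation_ring p v \<longleftrightarrow>
     (\<forall>x. v x = \<infinity> \<longleftrightarrow> x = 0) \<and>
     (\<forall>x. v x \<ge> 0) \<and>
     (\<forall>x y. v (x * y) = v x + v y) \<and>
     (\<forall>x y. v (x + y) \<ge> min (v x) (v y)) \<and>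
     v (of_nat p) = 1 \<and>
     (\<forall>x y. x \<noteq> 0 \<longrightarrow> v x \<le> v y \<longrightarrow> x dvd y)"

definition in_pow_ideal :: "nat \<Rightarrow> nat \<Rightarrow> 'a::comm_ring_1 \<Rightarrow> bool" where
  "in_pow_ideal p m x \<longleftrightarrow> (of_nat p) ^ m dvd x"

text \<open>Z_p inside R: the p-adic closure of Z\<close>
definition in_Zp :: "nat \<Rightarrow> 'a::comm_ring_1 \<Rightarrow> bool" where
  "in_Zp p l \<longleftrightarrow> (\<forall>m. \<exists>n::int. in_pow_ideal p m (l - of_int n))"

definition trunc_rep :: "nat \<Rightarrow> 'a::comm_ring_1 \<Rightarrow> nat \<Rightarrow> nat" where
  "trunc_rep p l m = (THE n. n < p ^ m \<and> in_pow_ideal p m (l - of_nat n))"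

definition cond_star :: "nat \<Rightarrow> 'a::comm_ring_1 \<Rightarrow> bool" where
  "cond_star p l \<longleftrightarrow>
     \<not> in_Zp p l \<or>
     (in_Zp p l \<and> l \<notin> range of_nat \<and>
        filterlim (\<lambda>m. real (trunc_rep p l m) / real m) at_top sequentially) \<or>
     l \<in> range of_nat"

end

theory Submission
  imports Defs
begin

lemma pvr_one_ne_zero:
  assumes "padic_valuation_ring p (v::'a::comm_ring_1 \<Rightarrow> ereal)"
  shows "(1::'a) \<noteq> 0"
proof
  assume h: "(1::'a) = 0"
  have "(of_nat p :: 'a) = 0" by (metis h mult_1 mult_zero_left)
  hence "v (of_nat p) = \<infinity>" using assms unfolding padic_valuation_ring_def by blast
  thus False using assms unfolding padic_valuation_ring_def by simp
qed

lemma pvr_v1: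
  assumes "padic_valuation_ring p (v::'a::comm_ring_1 \<Rightarrow> ereal)"
  shows "v 1 = 0"
proof -
  have ne: "v 1 \<noteq> \<infinity>" using assms pvr_one_ne_zero[OF assms] unfolding padic_valuation_ring_def by blast
  have ge: "v 1 \<ge> 0" using assms unfolding padic_valuation_ring_def by blast
  have "v 1 = v 1 + v 1" using assms unfolding padic_valuation_ring_def by (metis mult_1)
  then show ?thesis using ne ge by (cases "v 1") auto
qed

lemma pvr_vpow:
  assumes "padic_valuation_ring p (v::'a::comm_ring_1 \<Rightarrow> ereal)"
  shows "v ((of_nat p)^n) = ereal (real n)"
proof (induction n)
  case 0 then show ?case using pvr_v1[OF assms] by (simp add: zero_ereal_def)
next
  case (Suc n)
  have "v ((of_nat p)^Suc n) = v (of_nat p) + v ((of_nat p)^n)"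
    using assms unfolding padic_valuation_ring_def by simp
  also have "\<dots> = 1 + ereal (real n)" using Suc assms unfolding padic_valuation_ring_def by simp
  finally show ?case by (simp add: one_ereal_def)
qed

lemma pvr_coprime:
  assumes "padic_valuation_ring p (v::'a::comm_ring_1 \<Rightarrow> ereal)" "prime p" "\<not> p dvd s" "s > 0"
  shows "v (of_nat s) = 0"
proof (rule ccontr)
  assume nz: "v (of_nat s) \<noteq> 0"
  have A: "\<forall>x. v x \<ge> 0" "\<forall>x y. v (x * y) = v x + v y" "\<forall>x y. v (x + y) \<ge> min (v x) (v y)"
     "v (of_nat p) = 1" using assms(1) unfolding padic_valuation_ring_def by auto
  have pos: "v (of_nat s) > 0" using nz A(1) by (metis order_le_less)
  have "coprime s p" using assms(2,3) by (simp add: prime_imp_coprime coprime_commute)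
  then obtain x y where xy: "s * x = p * y + 1" using bezout_nat[of s p] assms(4) by auto
  hence "(of_nat s * of_nat x :: 'a) = of_nat p * of_nat y + 1" by (metis of_nat_mult of_nat_add of_nat_1)
  hence e: "(1::'a) = of_nat s * of_nat x + (-1) * (of_nat p * of_nat y)" by (simp add: algebra_simps)
  have "v (of_nat s * of_nat x :: 'a) \<ge> v (of_nat s)" using A by (simp add: add_increasing2)
  hence g1: "v (of_nat s * of_nat x :: 'a) > 0" using pos by simp
  have "v ((-1) * (of_nat p * of_nat y) :: 'a) = v (-1) + (1 + v (of_nat y))" using A by (simp only: A(2) A(4))
  also have "\<dots> \<ge> 1" using A by (metis add_increasing ereal_le_add_self)
  finally have g2: "v ((-1) * (of_nat p * of_nat y) :: 'a) > 0" using order.strict_trans2[of "0::ereal" 1] by simp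
  have "v (1::'a) \<ge> min (v (of_nat s * of_nat x :: 'a)) (v ((-1) * (of_nat p * of_nat y) :: 'a))"
    using A(3) e by metis
  hence "v (1::'a) > 0" using g1 g2 by (simp add: min_def split: if_splits)
  thus False using pvr_v1[OF assms(1)] by simp
qed

lemma pvr_notdvd_nat:
  assumes "padic_valuation_ring p (v::'a::comm_ring_1 \<Rightarrow> ereal)" "prime p" "0 < r" "r < p^m"
  shows "\<not> (of_nat p :: 'a)^m dvd of_nat r"
proof
  assume d: "(of_nat p :: 'a)^m dvd of_nat r"
  have A: "\<forall>x. v x \<ge> 0" "\<forall>x y. v (x * y) = v x + v y"
    using assms(1) unfolding padic_valuation_ring_def by auto
  define e where "e = multiplicity p r"
  obtain s where s: "r = p ^ e * s" "\<not> p dvd s"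
    using multiplicity_decompose'[of r p] assms(2,3) unfolding e_def[symmetric] by (metis not_prime_unit less_not_refl)
  have "s \<noteq> 0" using s(1) assms(3) by (cases "s = 0") auto
  hence spos: "s > 0" by simp
  have "p^e * 1 \<le> p^e * s" using spos by (intro mult_le_mono2) simp
  hence "p^e \<le> r" using s(1) by simp
  hence "p^e < p^m" using assms(4) by simp
  hence em: "e < m" using assms(2) prime_gt_1_nat power_less_imp_less_exp by blast
  have "v (of_nat r :: 'a) = v ((of_nat p)^e * of_nat s)" using s(1) by (metis of_nat_mult of_nat_power)
  also have "\<dots> = ereal (real e)" using A pvr_vpow[OF assms(1)] pvr_coprime[OF assms(1,2) s(2) spos] by simp
  finally have ve: "v (of_nat r :: 'a) = ereal (real e)" .
  obtain c where c: "(of_nat r :: 'a) = (of_nat p)^m * c" using d by (auto elim: dvdE)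
  have "v (of_nat r :: 'a) = ereal (real m) + v c" using c A pvr_vpow[OF assms(1)] by simp
  also have "\<dots> \<ge> ereal (real m)" using A by (simp add: ereal_le_add_self)
  finally have "ereal (real m) \<le> ereal (real e)" using ve by simp
  thus False using em by simp
qed

lemma pvr_notdvd_int:
  assumes "padic_valuation_ring p (v::'a::comm_ring_1 \<Rightarrow> ereal)" "prime p" "d \<noteq> 0" "\<bar>d\<bar> < int p^m"
  shows "\<not> (of_nat p :: 'a)^m dvd of_int d"
proof (cases "d > 0")
  case True
  have "(of_int d :: 'a) = of_nat (nat d)" using True by simp
  moreover have "nat d < p^m" using assms(4) True by (simp add: nat_less_iff)
  ultimately show ?thesis using pvr_notdvd_nat[OF assms(1,2), of "nat d" m] True by simp
next
  case False
  have "(of_int d :: 'a) = - of_nat (nat (-d))" using False by simp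
  moreover have "nat (-d) < p^m" using assms(3,4) False by (simp add: nat_less_iff)
  moreover have "0 < nat (-d)" using False assms(3) by simp
  ultimately show ?thesis using pvr_notdvd_nat[OF assms(1,2), of "nat (-d)" m] by simp
qed

lemma pvr_dvd_int:
  assumes "padic_valuation_ring p (v::'a::comm_ring_1 \<Rightarrow> ereal)" "prime p"
    "(of_nat p :: 'a)^m dvd of_int d"
  shows "int p ^ m dvd d"
proof (rule ccontr)
  assume nd: "\<not> int p ^ m dvd d"
  define P where "P = int p ^ m"
  have Ppos: "P > 0" using assms(2) prime_gt_0_nat unfolding P_def by simp
  have eq: "d = (d div P) * P + d mod P" by simp
  have "(of_int d :: 'a) = of_int (d div P) * (of_nat p)^m + of_int (d mod P)"
    by (subst eq) (simp add: P_def)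
  hence "(of_nat p :: 'a)^m dvd of_int (d mod P)" using assms(3)
    by (metis add_diff_cancel_left' dvd_diff dvd_triv_right)
  moreover have "d mod P \<noteq> 0" using nd unfolding P_def by (simp add: dvd_eq_mod_eq_0)
  moreover have "\<bar>d mod P\<bar> < int p ^ m" using Ppos unfolding P_def by simp
  ultimately show False using pvr_notdvd_int[OF assms(1,2)] by blast
qed

lemma trunc_uniq_aux:
  assumes "padic_valuation_ring p (v::'a::comm_ring_1 \<Rightarrow> ereal)" "prime p"
    "n1 < p^m" "in_pow_ideal p m (\<kappa> - of_nat n1)"
    "n2 < p^m" "in_pow_ideal p m (\<kappa> - (of_nat n2 :: 'a))"
  shows "n1 = n2"
proof (rule ccontr)
  assume ne: "n1 \<noteq> n2"
  have "(of_nat p :: 'a)^m dvd (\<kappa> - of_nat n2) - (\<kappa> - of_nat n1)"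
    using assms(4,6) unfolding in_pow_ideal_def by (rule dvd_diff[rotated])
  moreover have "(\<kappa> - of_nat n2) - (\<kappa> - of_nat n1) = (of_int (int n1 - int n2) :: 'a)" by simp
  ultimately have "(of_nat p :: 'a)^m dvd of_int (int n1 - int n2)" by simp
  moreover have "\<bar>int n1 - int n2\<bar> < int p ^ m" 
  proof -
    have "int n1 < int p ^ m" "int n2 < int p ^ m" using assms(3,5) by (metis of_nat_less_iff of_nat_power)+
    thus ?thesis by linarith
  qed
  moreover have "int n1 - int n2 \<noteq> 0" using ne by simp
  ultimately show False using pvr_notdvd_int[OF assms(1,2), of "int n1 - int n2" m] by blast
qed

lemma trunc_ex:
  assumes "prime p" "in_Zp p (\<kappa>::'a::comm_ring_1)"
  shows "\<exists>n. n < p^m \<and> in_pow_ideal p m (\<kappa> - of_nat n)"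
proof -
  obtain n :: int where n: "(of_nat p :: 'a)^m dvd \<kappa> - of_int n"
    using assms(2) unfolding in_Zp_def in_pow_ideal_def by blast
  define P where "P = int p ^ m"
  have Ppos: "P > 0" using assms(1) prime_gt_0_nat unfolding P_def by simp
  define r where "r = n mod P"
  have r0: "r \<ge> 0" "r < P" using Ppos unfolding r_def by auto
  have "n = (n div P) * P + r" unfolding r_def by simp
  hence "(of_int n :: 'a) = of_int (n div P) * (of_nat p)^m + of_int r"
    by (metis P_def of_int_add of_int_mult of_int_of_nat_eq of_int_power)
  hence eq2: "\<kappa> - of_int r = (\<kappa> - of_int n) + (of_nat p :: 'a)^m * of_int (n div P)"
    by (simp add: algebra_simps)
  have "(of_nat p :: 'a)^m dvd \<kappa> - of_int r" unfolding eq2 by (intro dvd_add n dvd_triv_left)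
  moreover have "(of_int r :: 'a) = of_nat (nat r)" using r0 by simp
  moreover have "nat r < p^m" using r0 unfolding P_def by (simp add: nat_less_iff)
  ultimately show ?thesis unfolding in_pow_ideal_def by metis
qed

lemma trunc_props:
  assumes "padic_valuation_ring p (v::'a::comm_ring_1 \<Rightarrow> ereal)" "prime p" "in_Zp p (\<kappa>::'a)"
  shows "trunc_rep p \<kappa> m < p^m \<and> in_pow_ideal p m (\<kappa> - of_nat (trunc_rep p \<kappa> m))"
proof -
  obtain n where n: "n < p^m \<and> in_pow_ideal p m (\<kappa> - of_nat n)" using trunc_ex[OF assms(2,3)] by blast
  have "trunc_rep p \<kappa> m = n" unfolding trunc_rep_def
  proof (rule the_equality)
    show "n < p ^ m \<and> in_pow_ideal p m (\<kappa> - of_nat n)" using n .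
  next
    fix x assume "x < p ^ m \<and> in_pow_ideal p m (\<kappa> - of_nat x)"
    thus "x = n" using trunc_uniq_aux[OF assms(1,2), of x m \<kappa> n] n by blast
  qed
  then show ?thesis using n by simp
qed

lemma trunc_uniq:
  assumes "padic_valuation_ring p (v::'a::comm_ring_1 \<Rightarrow> ereal)" "prime p" "in_Zp p (\<kappa>::'a)"
    "n < p^m" "in_pow_ideal p m (\<kappa> - of_nat n)"
  shows "trunc_rep p \<kappa> m = n"
  using trunc_props[OF assms(1,2,3), of m] trunc_uniq_aux[OF assms(1,2), of "trunc_rep p \<kappa> m" m \<kappa> n] assms(4,5) by blast

lemma log_ceil_upper:
  assumes "p > (1::nat)" "k > (0::nat)"
  shows "k \<le> p ^ nat \<lceil>log (real p) (real k)\<rceil>"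
proof -
  have l0: "log (real p) (real k) \<ge> 0" using assms by simp
  have "real k = real p powr log (real p) (real k)" using assms by simp
  also have "\<dots> \<le> real p powr real (nat \<lceil>log (real p) (real k)\<rceil>)"
    using assms l0 by (intro powr_mono) (auto simp: of_nat_nat ceiling_correct)
  also have "\<dots> = real (p ^ nat \<lceil>log (real p) (real k)\<rceil>)"
    using assms by (subst powr_realpow) auto
  finally show ?thesis by linarith
qed

lemma log_ceil_ge:
  assumes "p > (1::nat)" "p^s < k"
  shows "s + 1 \<le> nat \<lceil>log (real p) (real k)\<rceil>"
proof -
  have k0: "real k > 0" using assms(2) by simp
  have "real p powr real s < real k" using assms by (simp add: powr_realpow)
  hence "real s < log (real p) (real k)" using less_log_iff[of "real p" "real k"] assms k0 by simp
  hence "int s < \<lceil>log (real p) (real k)\<rceil>" by (simp add: less_ceiling_iff)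
  thus ?thesis by (simp add: le_nat_iff)
qed

lemma log_ceil_le:
  assumes "p > (1::nat)" "k < p^(s+1)" "k > 0"
  shows "nat \<lceil>log (real p) (real k)\<rceil> \<le> s + 1"
proof -
  have k0: "real k > 0" using assms by simp
  have "real k < real p ^ (s+1)" using assms(2) by (metis of_nat_less_iff of_nat_power)
  hence "real k < real p powr real (s+1)" using assms by (subst powr_realpow) auto
  hence "log (real p) (real k) < real (s+1)" using log_less_iff[of "real p" "real k"] assms k0 by simp
  hence "\<lceil>log (real p) (real k)\<rceil> \<le> int (s+1)" by (simp add: ceiling_le_iff)
  thus ?thesis by (simp add: nat_le_iff)
qed

lemma log_ceil_ge':
  assumes "p > (1::nat)" "p^s \<le> k"
  shows "s \<le> nat \<lceil>log (real p) (real k)\<rceil>"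
proof -
  have k0: "real k > 0" 
  proof -
    have "p^s > 0" using assms(1) by simp
    thus ?thesis using assms(2) by linarith
  qed
  have "real p powr real s \<le> real k" using assms by (subst powr_realpow) (auto simp flip: of_nat_power)
  hence "real s \<le> log (real p) (real k)" using le_log_iff[of "real p" "real k"] assms k0 by simp
  hence "int s \<le> \<lceil>log (real p) (real k)\<rceil>" by (metis ceiling_mono ceiling_of_nat)
  thus ?thesis by (simp add: le_nat_iff)
qed

lemma asym:
  fixes c :: real and p :: nat
  assumes "c > 0" "p > 1"
  shows "\<exists>N. \<forall>x\<ge>N. real x - 1 > c * (2 + log (real p) (real x + 1))"
proof -
  define L where "L = ln (real p)"
  have L0: "L > 0" using assms unfolding L_def by simp
  define \<epsilon> where "\<epsilon> = L / (4*c)"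
  have e0: "\<epsilon> > 0" using L0 assms unfolding \<epsilon>_def by simp
  have "(\<lambda>n. ln (real (Suc n)) / real (Suc n)) \<longlonglongrightarrow> 0"
    using LIMSEQ_Suc[OF lim_ln_over_n] by simp
  hence "eventually (\<lambda>n. ln (real (Suc n)) / real (Suc n) < \<epsilon>) sequentially"
    using order_tendstoD(2) e0 by blast
  then obtain N1 where N1: "\<And>n. n \<ge> N1 \<Longrightarrow> ln (real (Suc n)) / real (Suc n) < \<epsilon>"
    unfolding eventually_sequentially by blast
  define N where "N = max N1 (nat \<lceil>8*c\<rceil> + 5)"
  have "\<forall>x\<ge>N. real x - 1 > c * (2 + log (real p) (real x + 1))"
  proof (intro allI impI)
    fix x assume x: "x \<ge> N"
    have "ln (real (Suc x)) / real (Suc x) < \<epsilon>" using N1 x unfolding N_def by simp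
    hence "ln (real x + 1) < \<epsilon> * (real x + 1)" by (simp add: divide_less_eq add.commute)
    hence "log (real p) (real x + 1) < (real x + 1) / (4*c)"
      using L0 assms(1) unfolding log_def L_def[symmetric] \<epsilon>_def by (simp add: field_simps)
    hence "c * (2 + log (real p) (real x + 1)) < c * (2 + (real x + 1) / (4*c))"
      using assms(1) by simp
    also have "\<dots> = 2*c + (real x + 1)/4" using assms(1) by (simp add: field_simps)
    also have "\<dots> \<le> real x - 1"
    proof -
      have "real x \<ge> 8*c + 5" using x unfolding N_def by linarith
      thus ?thesis using assms(1) by (simp add: field_simps)
    qed
    finally show "real x - 1 > c * (2 + log (real p) (real x + 1))" .
  qed
  thus ?thesis by blast
qed

lemma log_lt:
  assumes "p > (1::nat)" "k < p^(s+1)" "k > 0"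
  shows "log (real p) (real k) < real s + 1"
proof -
  have k0: "real k > 0" using assms by simp
  have "real k < real p ^ (s+1)" using assms(2) by (metis of_nat_less_iff of_nat_power)
  hence "real k < real p powr real (s+1)" using assms by (subst powr_realpow) auto
  hence "log (real p) (real k) < real (s+1)" using log_less_iff[of "real p" "real k"] assms k0 by simp
  thus ?thesis by simp
qed

lemma trunc_step:
  assumes "padic_valuation_ring p (v::'a::comm_ring_1 \<Rightarrow> ereal)" "prime p" "in_Zp p (\<kappa>::'a)"
  shows "trunc_rep p \<kappa> m = trunc_rep p \<kappa> (Suc m) mod p^m"
proof -
  define b where "b = trunc_rep p \<kappa> (Suc m)"
  have "(of_nat p :: 'a)^(Suc m) dvd \<kappa> - of_nat b"
    using trunc_props[OF assms, of "Suc m"] unfolding b_def in_pow_ideal_def by blast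
  hence d: "(of_nat p :: 'a)^m dvd \<kappa> - of_nat b"
    by (metis dvd_trans le_imp_power_dvd le_SucI order_refl)
  have "b = b mod p^m + p^m * (b div p^m)" by simp
  hence "(of_nat b :: 'a) = of_nat (b mod p^m) + (of_nat p)^m * of_nat (b div p^m)"
    by (metis of_nat_add of_nat_mult of_nat_power)
  hence eq: "\<kappa> - of_nat (b mod p^m) = (\<kappa> - of_nat b) + (of_nat p :: 'a)^m * of_nat (b div p^m)"
    by (simp add: algebra_simps)
  have "(of_nat p :: 'a)^m dvd \<kappa> - of_nat (b mod p^m)" unfolding eq by (intro dvd_add d dvd_triv_left)
  moreover have "b mod p^m < p^m" using assms(2) prime_gt_0_nat by simp
  ultimately show ?thesis using trunc_uniq[OF assms] unfolding in_pow_ideal_def b_def by blast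
qed

lemma case_lin:
  fixes p c0 :: nat and v :: "'a::comm_ring_1 \<Rightarrow> ereal" and \<kappa>0 :: 'a
  assumes "prime p" "c0 > 0" "N0 > 0"
    and key: "\<And>j M. j \<ge> N0 \<Longrightarrow> j < p^M \<Longrightarrow> \<not> in_pow_ideal p M (of_nat j - \<kappa>0)"
  shows "\<exists>k :: nat \<Rightarrow> nat. strict_mono k \<and> (\<forall>i. k i > 0) \<and>
     (\<forall>i. real (k i) - 1 > real c0 * (2 + log (real p) (real (k (Suc i))))) \<and>
     (\<forall>i. \<forall>j. k i \<le> j \<and> j < k (Suc i) \<longrightarrow>
        \<not> in_pow_ideal p (nat \<lceil>log (real p) (real (k (Suc i)))\<rceil>) (of_nat j - \<kappa>0))"
proof -
  have p1: "p > 1" using assms(1) prime_gt_1_nat by blast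
  obtain N1 where N1: "\<forall>x\<ge>N1. real x - 1 > real c0 * (2 + log (real p) (real x + 1))"
    using asym[of "real c0" p] assms(2) p1 by auto
  define N where "N = max N1 N0"
  define k where "k = (\<lambda>i. N + i)"
  have "strict_mono k" unfolding k_def strict_mono_def by simp
  moreover have "\<forall>i. k i > 0" unfolding k_def N_def using assms(3) by (simp add: less_max_iff_disj)
  moreover have "\<forall>i. real (k i) - 1 > real c0 * (2 + log (real p) (real (k (Suc i))))"
  proof
    fix i
    have "real (N+i) - 1 > real c0 * (2 + log (real p) (real (N+i) + 1))"
      using N1[rule_format, of "N+i"] unfolding N_def by simp
    thus "real (k i) - 1 > real c0 * (2 + log (real p) (real (k (Suc i))))"
      unfolding k_def by (simp add: add.commute add.left_commute)
  qed
  moreover have "\<forall>i. \<forall>j. k i \<le> j \<and> j < k (Suc i) \<longrightarrow>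
        \<not> in_pow_ideal p (nat \<lceil>log (real p) (real (k (Suc i)))\<rceil>) (of_nat j - \<kappa>0)"
  proof (intro allI impI)
    fix i j assume j: "k i \<le> j \<and> j < k (Suc i)"
    have "k (Suc i) \<le> p ^ nat \<lceil>log (real p) (real (k (Suc i)))\<rceil>"
      using log_ceil_upper[OF p1, of "k (Suc i)"] unfolding k_def by simp
    moreover have "j \<ge> N0" using j unfolding k_def N_def by (metis max.bounded_iff le_add1 order_trans)
    ultimately show "\<not> in_pow_ideal p (nat \<lceil>log (real p) (real (k (Suc i)))\<rceil>) (of_nat j - \<kappa>0)"
      using key j by (meson less_le_trans)
  qed
  ultimately show ?thesis by blast
qed

lemma case_Zp:
  fixes p c0 :: nat and v :: "'a::comm_ring_1 \<Rightarrow> ereal" and \<kappa>0 :: 'a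
  assumes pr: "prime p" and vr: "padic_valuation_ring p v" and c0: "c0 > 0"
    and Z: "in_Zp p \<kappa>0"
    and lim: "filterlim (\<lambda>m. real (trunc_rep p \<kappa>0 m) / real m) at_top sequentially"
  shows "\<exists>k :: nat \<Rightarrow> nat. strict_mono k \<and> (\<forall>i. k i > 0) \<and>
     (\<forall>i. real (k i) - 1 > real c0 * (2 + log (real p) (real (k (Suc i))))) \<and>
     (\<forall>i. \<forall>j. k i \<le> j \<and> j < k (Suc i) \<longrightarrow>
        \<not> in_pow_ideal p (nat \<lceil>log (real p) (real (k (Suc i)))\<rceil>) (of_nat j - \<kappa>0))"
proof -
  have p1: "p > 1" using pr prime_gt_1_nat by blast
  define a where "a = trunc_rep p \<kappa>0"
  have A1: "\<And>m. a m < p^m" and A1': "\<And>m. in_pow_ideal p m (\<kappa>0 - of_nat (a m))"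
    using trunc_props[OF vr pr Z] unfolding a_def by auto
  have A2: "\<And>m. a m = a (Suc m) mod p^m" using trunc_step[OF vr pr Z] unfolding a_def by blast
  have A3: "\<And>m. a m \<le> a (Suc m)"
  proof -
    fix m show "a m \<le> a (Suc m)" using A2[of m] mod_less_eq_dividend[of "a (Suc m)" "p^m"] by linarith
  qed
  have A4: "\<And>m. a (Suc m) \<noteq> a m \<Longrightarrow> p^m \<le> a (Suc m)"
  proof (rule ccontr)
    fix m assume ne: "a (Suc m) \<noteq> a m" and "\<not> p^m \<le> a (Suc m)"
    hence "a (Suc m) mod p^m = a (Suc m)" by simp
    thus False using ne A2[of m] by simp
  qed
  have "\<forall>\<^sub>F m in sequentially. real (4*c0) \<le> real (a m) / real m"
    using lim unfolding filterlim_at_top a_def by blast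
  then obtain m0 where m0: "\<And>m. m \<ge> m0 \<Longrightarrow> real (4*c0) \<le> real (a m) / real m"
    unfolding eventually_sequentially by blast
  define m1 where "m1 = Suc m0"
  have grow: "\<And>m. m \<ge> m1 \<Longrightarrow> real (4*c0) * real m \<le> real (a m)"
  proof -
    fix m assume m: "m \<ge> m1"
    hence "m > 0" "m \<ge> m0" unfolding m1_def by auto
    thus "real (4*c0) * real m \<le> real (a m)" using m0[of m] by (simp add: pos_le_divide_eq)
  qed
  have inf: "\<And>m. \<exists>t>m. a (Suc t) \<noteq> a t"
  proof (rule ccontr)
    fix m assume "\<not> (\<exists>t>m. a (Suc t) \<noteq> a t)"
    hence const: "\<And>t. t > m \<Longrightarrow> a (Suc t) = a t" by blast
    have ct: "\<And>t. t \<ge> Suc m \<Longrightarrow> a t = a (Suc m)"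
    proof -
      fix t assume "t \<ge> Suc m"
      thus "a t = a (Suc m)"
      proof (induction t rule: dec_induct)
        case base then show ?case by simp
      next
        case (step t) then show ?case using const[of t] by simp
      qed
    qed
    define t where "t = max (Suc m) m1 + a (Suc m) + 1"
    have "t \<ge> m1" unfolding t_def by simp
    hence "real (4*c0) * real t \<le> real (a t)" by (rule grow)
    moreover have "real t \<le> real (4*c0) * real t"
    proof -
      have "real (4*c0) \<ge> 1" using c0 by simp
      from mult_right_mono[OF this, of "real t"] show ?thesis by simp
    qed
    moreover have "t \<ge> Suc m" unfolding t_def by simp
    hence "a t = a (Suc m)" by (rule ct)
    moreover have "real t > real (a (Suc m))" unfolding t_def by simp
    ultimately show False by linarith
  qed
  define nxt where "nxt = (\<lambda>m. LEAST t. t > m \<and> a (Suc t) \<noteq> a t)"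
  have nxt1: "\<And>m. nxt m > m \<and> a (Suc (nxt m)) \<noteq> a (nxt m)"
    unfolding nxt_def using LeastI_ex[OF inf] by blast
  have nxt2: "\<And>m t. m < t \<Longrightarrow> t < nxt m \<Longrightarrow> a (Suc t) = a t"
    unfolding nxt_def using not_less_Least by blast
  define s where "s = rec_nat (nxt (m1+3)) (\<lambda>_ x. nxt x)"
  have s0: "s 0 = nxt (m1+3)" and sS: "\<And>i. s (Suc i) = nxt (s i)" unfolding s_def by simp_all
  have s_ge: "\<And>i. s i > m1 + 3"
  proof -
    fix i show "s i > m1 + 3"
    proof (induction i)
      case 0 then show ?case using s0 nxt1[of "m1+3"] by simp
    next
      case (Suc i) then show ?case using sS[of i] nxt1[of "s i"] by simp
    qed
  qed
  have between: "\<And>i t. Suc (s i) \<le> t \<Longrightarrow> t \<le> s (Suc i) \<Longrightarrow> a t = a (Suc (s i))"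
  proof -
    fix i t assume "Suc (s i) \<le> t" "t \<le> s (Suc i)"
    thus "a t = a (Suc (s i))"
    proof (induction t rule: dec_induct)
      case base then show ?case by simp
    next
      case (step t)
      have "a (Suc t) = a t" using nxt2[of "s i" t] step sS[of i] by simp
      then show ?case using step by simp
    qed
  qed
  define k where "k = (\<lambda>i. a (Suc (s i)))"
  have kprev: "\<And>i. a (s (Suc i)) = k i"
  proof -
    fix i have "Suc (s i) \<le> s (Suc i)" using nxt1[of "s i"] sS[of i] by simp
    thus "a (s (Suc i)) = k i" unfolding k_def using between[of i "s (Suc i)"] by simp
  qed
  have kge: "\<And>i. p ^ (s i) \<le> k i" unfolding k_def
  proof -
    fix i
    have "s (Suc i) \<noteq> 0" using s_ge[of "Suc i"] by simp
    obtain j where "s i = nxt j"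
      by (cases i) (use s0 sS in auto)
    thus "p ^ (s i) \<le> a (Suc (s i))" using A4[of "s i"] nxt1[of j] by simp
  qed
  have kpos: "\<And>i. k i > 0"
  proof -
    fix i have "p^(s i) > 0" using p1 by simp
    thus "k i > 0" using kge[of i] by linarith
  qed
  have klt: "\<And>i. k i < p ^ Suc (s i)" unfolding k_def using A1 by blast
  have mono: "\<And>i. k i < k (Suc i)"
  proof -
    fix i
    have "k i = a (s (Suc i))" using kprev by simp
    also have "\<dots> < p ^ s (Suc i)" using A1 by blast
    also have "\<dots> \<le> k (Suc i)" using kge by blast
    finally show "k i < k (Suc i)" .
  qed
  have "strict_mono k" using mono by (simp add: strict_mono_Suc_iff)
  moreover have "\<forall>i. real (k i) - 1 > real c0 * (2 + log (real p) (real (k (Suc i))))"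
  proof
    fix i
    define S where "S = s (Suc i)"
    have S3: "S \<ge> 3" "S \<ge> m1" using s_ge[of "Suc i"] unfolding S_def by auto
    have "real (4*c0) * real S \<le> real (k i)" using grow[OF S3(2)] kprev[of i] unfolding S_def by simp
    moreover have "log (real p) (real (k (Suc i))) < real S + 1"
      using log_lt[OF p1 _ kpos[of "Suc i"], of S] klt[of "Suc i"] unfolding S_def by simp
    moreover have "real c0 * real S \<ge> real c0 * 3" using S3 by (intro mult_left_mono) auto
    moreover have "real c0 \<ge> 1" using c0 by simp
    ultimately have "real c0 * (2 + log (real p) (real (k (Suc i)))) < real (k i) - 1"
    proof -
      assume h: "real (4*c0) * real S \<le> real (k i)" "log (real p) (real (k (Suc i))) < real S + 1"
        "real c0 * real S \<ge> real c0 * 3" "real c0 \<ge> 1"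
      have "real c0 * (2 + log (real p) (real (k (Suc i)))) < real c0 * (2 + (real S + 1))"
        using h(2) h(4) by (intro mult_strict_left_mono) auto
      also have "\<dots> = real c0 * real S + 3 * real c0" by (simp add: algebra_simps)
      also have "\<dots> < real (4*c0) * real S - 1" unfolding of_nat_mult using h(3,4) by linarith
      finally show ?thesis using h(1) by linarith
    qed
    thus "real (k i) - 1 > real c0 * (2 + log (real p) (real (k (Suc i))))" by simp
  qed
  moreover have "\<forall>i. \<forall>j. k i \<le> j \<and> j < k (Suc i) \<longrightarrow>
        \<not> in_pow_ideal p (nat \<lceil>log (real p) (real (k (Suc i)))\<rceil>) (of_nat j - \<kappa>0)"
  proof (intro allI impI notI)
    fix i j
    assume j: "k i \<le> j \<and> j < k (Suc i)"
    define M where "M = nat \<lceil>log (real p) (real (k (Suc i)))\<rceil>"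
    define S where "S = s (Suc i)"
    assume "in_pow_ideal p (nat \<lceil>log (real p) (real (k (Suc i)))\<rceil>) (of_nat j - \<kappa>0)"
    hence "in_pow_ideal p M (\<kappa>0 - of_nat j)" unfolding M_def in_pow_ideal_def
      by (metis dvd_minus_iff minus_diff_eq)
    moreover have "j < p^M" using j log_ceil_upper[OF p1 kpos[of "Suc i"]] unfolding M_def by simp
    ultimately have aM: "a M = j" using trunc_uniq[OF vr pr Z] unfolding a_def by blast
    have kS: "k (Suc i) = a (Suc S)" unfolding k_def S_def by simp
    have "k (Suc i) mod p^S = a S" using A2[of S] kS by simp
    also have "\<dots> = k i" using kprev unfolding S_def by simp
    finally have "k (Suc i) mod p^S = k i" .
    hence "k (Suc i) \<noteq> p^S" using kpos[of i] by auto
    hence "p^S < k (Suc i)" using kge[of "Suc i"] unfolding S_def by simp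
    hence "S + 1 \<le> M" using log_ceil_ge[OF p1] unfolding M_def by simp
    moreover have "M \<le> S + 1" using log_ceil_le[OF p1 _ kpos[of "Suc i"]] klt[of "Suc i"]
      unfolding M_def S_def by simp
    ultimately have "M = Suc S" by simp
    hence "j = k (Suc i)" using aM kS by simp
    thus False using j by simp
  qed
  ultimately show ?thesis using kpos by blast
qed

theorem lemma4p5:
  fixes p c0 :: nat and v :: "'a::comm_ring_1 \<Rightarrow> ereal" and \<kappa>0 :: 'a
  assumes "prime p"
    and "padic_valuation_ring p v"
    and "c0 > 0"
    and "cond_star p \<kappa>0"
  shows "\<exists>k :: nat \<Rightarrow> nat. strict_mono k \<and> (\<forall>i. k i > 0) \<and>
     (\<forall>i. real (k i) - 1 > real c0 * (2 + log (real p) (real (k (Suc i))))) \<and>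
     (\<forall>i. \<forall>j. k i \<le> j \<and> j < k (Suc i) \<longrightarrow>
        \<not> in_pow_ideal p (nat \<lceil>log (real p) (real (k (Suc i)))\<rceil>) (of_nat j - \<kappa>0))"
proof -
  have p1: "p > 1" using assms(1) prime_gt_1_nat by blast
  consider (C1) "\<not> in_Zp p \<kappa>0"
    | (C2) "in_Zp p \<kappa>0" "filterlim (\<lambda>m. real (trunc_rep p \<kappa>0 m) / real m) at_top sequentially"
    | (C3) "\<kappa>0 \<in> range of_nat"
    using assms(4) unfolding cond_star_def by blast
  then show ?thesis
  proof cases
    case C1
    then obtain m0 where m0: "\<And>n::int. \<not> in_pow_ideal p m0 (\<kappa>0 - of_int n)"
      unfolding in_Zp_def by blast
    show ?thesis
    proof (rule case_lin[OF assms(1,3)])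
      show "0 < p ^ m0" using p1 by simp
    next
      fix j M assume j: "p ^ m0 \<le> j" "j < p ^ M"
      have "p ^ m0 < p ^ M" using j by simp
      hence "m0 < M" using p1 power_less_imp_less_exp by blast
      hence dv: "(of_nat p :: 'a) ^ m0 dvd (of_nat p) ^ M" by (intro le_imp_power_dvd) simp
      show "\<not> in_pow_ideal p M (of_nat j - \<kappa>0)"
      proof
        assume "in_pow_ideal p M (of_nat j - \<kappa>0)"
        hence "(of_nat p :: 'a) ^ m0 dvd of_nat j - \<kappa>0" using dv unfolding in_pow_ideal_def
          by (rule dvd_trans[rotated])
        hence "(of_nat p :: 'a) ^ m0 dvd \<kappa>0 - of_int (int j)"
          by (metis dvd_minus_iff minus_diff_eq of_int_of_nat_eq)
        thus False using m0[of "int j"] unfolding in_pow_ideal_def by blast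
      qed
    qed
  next
    case C2
    show ?thesis by (rule case_Zp[OF assms(1,2,3) C2])
  next
    case C3
    then obtain n where n: "\<kappa>0 = of_nat n" by blast
    show ?thesis
    proof (rule case_lin[OF assms(1,3)])
      show "0 < n + 1" by simp
    next
      fix j M assume j: "n + 1 \<le> j" "j < p ^ M"
      have "(of_nat j - \<kappa>0 :: 'a) = of_nat (j - n)" using j n by (simp add: of_nat_diff)
      moreover have "0 < j - n" "j - n < p ^ M" using j by auto
      hence "\<not> (of_nat p :: 'a) ^ M dvd of_nat (j - n)" by (rule pvr_notdvd_nat[OF assms(2,1)])
      ultimately show "\<not> in_pow_ideal p M (of_nat j - \<kappa>0)"
        unfolding in_pow_ideal_def by simp
    qed
  qed
qed

end
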